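(* Let $\mathcal H$ be a non-binary MMP hypergraph of hypergraph-dimension $n\ge 3$ with $l$ hyperedges. Then $\mathcal H$ satisfies the e-inequalities $$l_{cM}<l\qquad\text{and}\qquad l_{cm}<l .$$
   Context: A hypergraph $\mathcal H=(V,E)$ consists of a finite vertex set $V$ and a family $E$ of subsets of $V$ (hyperedges). An MMP hypergraph of hypergraph-dimension $n\ge3$ is a connected hypergraph in which: every vertex belongs to at least one hyperedge; every hyperedge contains at least $2$ and at most $n$ vertices; no hyperedge shares only one vertex with another hyperedge; and any two hyperedges intersect in at most $n-2$ vertices. Consider $0$-$1$ assignments to the vertices and the rules: (i) no two vertices within any hyperedge are both assigned $1$; (ii) in every hyperedge not all vertices are assigned $0$. $\mathcal H$ is non-binary if no $0$-$1$ assignment satisfies both (i) and (ii), and binary otherwise. A classical assignment is a $0$-$1$ assignment satisfying rule (i) in which no further vertex can be switched from $0$ to $1$ without violating (i). For a classical assignment, the classical hyperedge number $l_c$ is the number of hyperedges containing a vertex assigned $1$; $l_{cM}$ and $l_{cm}$ denote the maximum and minimum of $l_c$ over all classical assignments. *)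

theory Defs
  imports Main
begin

definition hypergraph :: "'a set \<Rightarrow> 'a set set \<Rightarrow> bool" where
  "hypergraph V E \<longleftrightarrow> finite V \<and> (\<forall>e\<in>E. e \<subseteq> V)"

definition hg_adj :: "'a set set \<Rightarrow> ('a \<times> 'a) set" where
  "hg_adj E = {(u, v). \<exists>e\<in>E. u \<in> e \<and> v \<in> e}"

definition hg_connected :: "'a set \<Rightarrow> 'a set set \<Rightarrow> bool" where
  "hg_connected V E \<longleftrightarrow> (\<forall>u\<in>V. \<forall>v\<in>V. (u, v) \<in> (hg_adj E)\<^sup>*)"

definition MMP :: "nat \<Rightarrow> 'a set \<Rightarrow> 'a set set \<Rightarrow> bool" where
  "MMP n V E \<longleftrightarrow> n \<ge> 3 \<and> hypergraph V E \<and> hg_connected V E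
     \<and> (\<forall>v\<in>V. \<exists>e\<in>E. v \<in> e)
     \<and> (\<forall>e\<in>E. 2 \<le> card e \<and> card e \<le> n)
     \<and> (\<forall>e\<in>E. \<forall>f\<in>E. e \<noteq> f \<longrightarrow> card (e \<inter> f) \<noteq> 1)
     \<and> (\<forall>e\<in>E. \<forall>f\<in>E. e \<noteq> f \<longrightarrow> card (e \<inter> f) \<le> n - 2)"

(* a 0-1 assignment is represented by the set S \<subseteq> V of vertices assigned 1 *)
definition rule_i :: "'a set set \<Rightarrow> 'a set \<Rightarrow> bool" where
  "rule_i E S \<longleftrightarrow> (\<forall>e\<in>E. \<forall>u\<in>e. \<forall>v\<in>e. u \<noteq> v \<longrightarrow> \<not> (u \<in> S \<and> v \<in> S))"

definition rule_ii :: "'a set set \<Rightarrow> 'a set \<Rightarrow> bool" where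
  "rule_ii E S \<longleftrightarrow> (\<forall>e\<in>E. \<exists>v\<in>e. v \<in> S)"

definition non_binary :: "'a set \<Rightarrow> 'a set set \<Rightarrow> bool" where
  "non_binary V E \<longleftrightarrow> \<not> (\<exists>S\<subseteq>V. rule_i E S \<and> rule_ii E S)"

definition classical :: "'a set \<Rightarrow> 'a set set \<Rightarrow> 'a set \<Rightarrow> bool" where
  "classical V E S \<longleftrightarrow> S \<subseteq> V \<and> rule_i E S \<and>
     (\<forall>v\<in>V - S. \<not> rule_i E (insert v S))"

definition l_c :: "'a set set \<Rightarrow> 'a set \<Rightarrow> nat" where
  "l_c E S = card {e\<in>E. \<exists>v\<in>e. v \<in> S}"

definition l_cM :: "'a set \<Rightarrow> 'a set set \<Rightarrow> nat" where
  "l_cM V E = Max {l_c E S | S. classical V E S}"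

definition l_cm :: "'a set \<Rightarrow> 'a set set \<Rightarrow> nat" where
  "l_cm V E = Min {l_c E S | S. classical V E S}"

end

theory Submission
  imports Defs
begin

lemma classical_exists:
  assumes "finite V"
  shows "\<exists>S. classical V E S"
proof -
  let ?F = "{S. S \<subseteq> V \<and> rule_i E S}"
  have fin: "finite ?F" using assms by (simp add: finite_subset[of _ "Pow V"] subset_eq)
  have ne: "{} \<in> ?F" by (simp add: rule_i_def)
  let ?m = "Max (card ` ?F)"
  have "?m \<in> card ` ?F" using Max_in[of "card ` ?F"] fin ne by blast
  then obtain S where S: "S \<in> ?F" "card S = ?m" by force
  have "classical V E S"
    unfolding classical_def
  proof (intro conjI ballI)
    show "S \<subseteq> V" "rule_i E S" using S by auto
  next
    fix v assume v: "v \<in> V - S"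
    show "\<not> rule_i E (insert v S)"
    proof
      assume r: "rule_i E (insert v S)"
      hence "insert v S \<in> ?F" using S v by auto
      hence "card (insert v S) \<le> ?m" using fin by auto
      moreover have "finite S" using S assms finite_subset by auto
      ultimately show False using v S by auto
    qed
  qed
  thus ?thesis by blast
qed

theorem lemma5:
  fixes V :: "'a set" and E :: "'a set set" and n :: nat
  assumes "MMP n V E" and "non_binary V E"
  shows "l_cM V E < card E \<and> l_cm V E < card E"
proof -
  have hV: "finite V" and hE: "\<forall>e\<in>E. e \<subseteq> V"
    using assms(1) unfolding MMP_def hypergraph_def by auto
  have finE: "finite E" using hV hE by (meson Pow_iff finite_Pow_iff finite_subset subsetI)
  have lt: "l_c E S < card E" if c: "classical V E S" for S
  proof -
    have sub: "{e\<in>E. \<exists>v\<in>e. v \<in> S} \<subseteq> E" by auto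
    have "l_c E S \<noteq> card E"
    proof
      assume "l_c E S = card E"
      hence "{e\<in>E. \<exists>v\<in>e. v \<in> S} = E" using card_subset_eq[OF finE sub] unfolding l_c_def by auto
      hence "rule_ii E S" unfolding rule_ii_def by auto
      thus False using c assms(2) unfolding classical_def non_binary_def by auto
    qed
    moreover have "l_c E S \<le> card E" unfolding l_c_def using card_mono[OF finE sub] .
    ultimately show ?thesis by auto
  qed
  let ?A = "{l_c E S | S. classical V E S}"
  have finA: "finite ?A"
  proof -
    have "?A \<subseteq> {..card E}" using lt by fastforce
    thus ?thesis using finite_subset by blast
  qed
  obtain S0 where S0: "classical V E S0" using classical_exists[OF hV] by blast
  have neA: "?A \<noteq> {}" using S0 by blast
  have "Max ?A \<in> ?A" using Max_in[OF finA neA] .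
  hence 1: "l_cM V E < card E" unfolding l_cM_def using lt by auto
  have "Min ?A \<in> ?A" using Min_in[OF finA neA] .
  hence 2: "l_cm V E < card E" unfolding l_cm_def using lt by auto
  show ?thesis using 1 2 by auto
qed

end
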